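(* Let $N$ be a sub-sound tWF net, $M$ a sub-sound tWF net whose node set is disjoint from that of $N$, and $t$ a transition of $N$. Then the tWF net $N\otimes_t M$ is sub-sound.
   Context: Petri nets and markings. A Petri net is a triple $(P,T,F)$ with $P$ a finite set of places, $T$ a finite set of transitions, $P\cap T=\emptyset$, and $F\subseteq (P\times T)\cup(T\times P)$. For a node $x$, $\bullet x=\{y\mid (y,x)\in F\}$, $x\bullet=\{y\mid (x,y)\in F\}$. A marking is a multiset over $P$ (a function $P\to\mathbb N$); sets of places are identified with bags of multiplicity one, $+,-,\le$ are pointwise, and $k.m$ is the sum of $k$ copies of $m$. Transition $t$ is enabled at $m$ iff $\bullet t\le m$, firing gives $m-\bullet t+t\bullet$, and $m\xrightarrow{*}m'$ denotes reachability by a finite (possibly empty) firing sequence. Workflow nets. A pWF net is $(P,T,F,I,O)$ with $(P,T,F)$ a Petri net, $I,O\subseteq P$ non-empty, every node reachable by a directed path from some node of $I$, and some node of $O$ reachable from every node. A tWF net is the same with $I,O$ non-empty subsets of $T$. Input nodes may have incoming edges and output nodes outgoing edges. The place-completion $\mathrm{pc}(N)$ of a tWF net $N=(P,T,F,I,O)$ is obtained by adding two fresh places $p_i,p_o$ with edges $(p_i,t)$ for all $t\in I$ and $(t,p_o)$ for all $t\in O$, and taking input set $\{p_i\}$ and output set $\{p_o\}$. Sub-soundness. A pWF net is sub-sound if for all integers $k\ge k'\ge 0$ and every marking $m'$: if $k.I\xrightarrow{*}m'+k'.O$ then $m'\xrightarrow{*}(k-k').O$. A tWF net is sub-sound iff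 its place-completion is. Transition substitution. For a WF net $N=(P,T,F,I,O)$ and a tWF net $M=(P',T',F',I',O')$ with disjoint node sets and $t\in T$, $N\otimes_t M$ is obtained from $N$ by deleting $t$ and all edges incident to $t$, adding all nodes and edges of $M$, adding an edge $(q,t')$ for each $q\in\bullet_N t$ and $t'\in I'$, and an edge $(t',q)$ for each $t'\in O'$ and $q\in t\bullet_N$; its input set is $(I\setminus\{t\})\cup I'$ if $t\in I$ and $I$ otherwise, and its output set is $(O\setminus\{t\})\cup O'$ if $t\in O$ and $O$ otherwise. *)

theory Defs
  imports Main "HOL-Library.Multiset"
begin

record 'a net =
  places :: "'a set"
  trans  :: "'a set"
  flow   :: "('a \<times> 'a) set"
  inp    :: "'a set"
  outp   :: "'a set"

definition nodes :: "('a, 'b) net_scheme \<Rightarrow> 'a set" where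
  "nodes N = places N \<union> trans N"

definition preset :: "('a, 'b) net_scheme \<Rightarrow> 'a \<Rightarrow> 'a set" where
  "preset N x = {y. (y, x) \<in> flow N}"

definition postset :: "('a, 'b) net_scheme \<Rightarrow> 'a \<Rightarrow> 'a set" where
  "postset N x = {y. (x, y) \<in> flow N}"

definition petri_net :: "('a, 'b) net_scheme \<Rightarrow> bool" where
  "petri_net N \<longleftrightarrow> finite (places N) \<and> finite (trans N) \<and> places N \<inter> trans N = {}
     \<and> flow N \<subseteq> (places N \<times> trans N) \<union> (trans N \<times> places N)"

definition wf_conn :: "('a, 'b) net_scheme \<Rightarrow> bool" where
  "wf_conn N \<longleftrightarrow> (\<forall>x \<in> nodes N. \<exists>i \<in> inp N. (i, x) \<in> (flow N)\<^sup>*)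
                \<and> (\<forall>x \<in> nodes N. \<exists>z \<in> outp N. (x, z) \<in> (flow N)\<^sup>*)"

definition pWF :: "('a, 'b) net_scheme \<Rightarrow> bool" where
  "pWF N \<longleftrightarrow> petri_net N \<and> inp N \<noteq> {} \<and> outp N \<noteq> {}
     \<and> inp N \<subseteq> places N \<and> outp N \<subseteq> places N \<and> wf_conn N"

definition tWF :: "('a, 'b) net_scheme \<Rightarrow> bool" where
  "tWF N \<longleftrightarrow> petri_net N \<and> inp N \<noteq> {} \<and> outp N \<noteq> {}
     \<and> inp N \<subseteq> trans N \<and> outp N \<subseteq> trans N \<and> wf_conn N"

text \<open>Markings are multisets of places; a set of places is the bag of multiplicity one.\<close>
definition enabled :: "('a, 'b) net_scheme \<Rightarrow> 'a \<Rightarrow> 'a multiset \<Rightarrow> bool" where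
  "enabled N t m \<longleftrightarrow> mset_set (preset N t) \<subseteq># m"

definition step :: "('a, 'b) net_scheme \<Rightarrow> 'a multiset \<Rightarrow> 'a multiset \<Rightarrow> bool" where
  "step N m m' \<longleftrightarrow> (\<exists>t \<in> trans N. enabled N t m
        \<and> m' = m - mset_set (preset N t) + mset_set (postset N t))"

definition reach :: "('a, 'b) net_scheme \<Rightarrow> 'a multiset \<Rightarrow> 'a multiset \<Rightarrow> bool" where
  "reach N = (step N)\<^sup>*\<^sup>*"

definition sub_sound_p :: "('a, 'b) net_scheme \<Rightarrow> bool" where
  "sub_sound_p N \<longleftrightarrow> (\<forall>k k' :: nat. \<forall>m'. k' \<le> k \<longrightarrow>
      reach N (repeat_mset k (mset_set (inp N))) (m' + repeat_mset k' (mset_set (outp N)))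
      \<longrightarrow> reach N m' (repeat_mset (k - k') (mset_set (outp N))))"

text \<open>Place completion: old nodes are tagged Old, the fresh places are Pin and Pout.\<close>
datatype 'a pcnode = Old 'a | Pin | Pout

definition pc :: "'a net \<Rightarrow> 'a pcnode net" where
  "pc N = \<lparr> places = Old ` places N \<union> {Pin, Pout},
            trans = Old ` trans N,
            flow = map_prod Old Old ` flow N
                   \<union> {(Pin, Old t) | t. t \<in> inp N}
                   \<union> {(Old t, Pout) | t. t \<in> outp N},
            inp = {Pin},
            outp = {Pout} \<rparr>"

definition sub_sound_t :: "'a net \<Rightarrow> bool" where
  "sub_sound_t N \<longleftrightarrow> sub_sound_p (pc N)"

definition subst_trans :: "'a net \<Rightarrow> 'a \<Rightarrow> 'a net \<Rightarrow> 'a net" where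
  "subst_trans N t M = \<lparr> places = places N \<union> places M,
      trans = (trans N - {t}) \<union> trans M,
      flow = {e \<in> flow N. fst e \<noteq> t \<and> snd e \<noteq> t} \<union> flow M
             \<union> {(q, t'). q \<in> preset N t \<and> t' \<in> inp M}
             \<union> {(t', q). t' \<in> outp M \<and> q \<in> postset N t},
      inp = (if t \<in> inp N then (inp N - {t}) \<union> inp M else inp N),
      outp = (if t \<in> outp N then (outp N - {t}) \<union> outp M else outp N) \<rparr>"

end

theory Submission
  imports Defs
begin

lemma preset_pc: "preset (pc X) (Old u) = Old ` preset X u \<union> (if u \<in> inp X then {Pin} else {})"
  by (auto simp: preset_def pc_def)
lemma postset_pc: "postset (pc X) (Old u) = Old ` postset X u \<union> (if u \<in> outp X then {Pout} else {})"
  by (auto simp: postset_def pc_def)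
lemma trans_pc[simp]: "trans (pc X) = Old ` trans X" by (simp add: pc_def)
lemma inp_pc[simp]: "inp (pc X) = {Pin}" by (simp add: pc_def)
lemma outp_pc[simp]: "outp (pc X) = {Pout}" by (simp add: pc_def)
lemma Pout_notin_preset: "Pout \<notin> preset (pc X) x" by (auto simp: preset_def pc_def)

lemma msub_eq: "(p::'a multiset) \<subseteq># a \<Longrightarrow> a - p + q + c = a + c - p + q"
  by (metis add.assoc add.commute subset_mset.add_diff_assoc2)

lemma replicate_mset_add: "replicate_mset (a+b) x = replicate_mset a x + replicate_mset b x"
  by (induct a) auto

lemma mset_set_single: "mset_set {x} = {#x#}" by simp

lemma step_add: "step X a b \<Longrightarrow> step X (a + c) (b + c)"
  unfolding step_def enabled_def
  by (metis msub_eq mset_subset_eq_add_left subset_mset.order_trans)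

lemma reach_add: "reach X a b \<Longrightarrow> reach X (a + c) (b + c)"
  unfolding reach_def
proof (induction rule: rtranclp_induct)
  case base then show ?case by simp
next
  case (step y z) then show ?case
    by (metis (no_types, lifting) rtranclp.simps step_add)
qed

lemma reach_trans: "reach X a b \<Longrightarrow> reach X b c \<Longrightarrow> reach X a c"
  unfolding reach_def by simp

lemma reach_refl: "reach X a a" unfolding reach_def by simp

lemma step_reach: "step X a b \<Longrightarrow> reach X a b" unfolding reach_def by simp

lemma count_Pout_step: "step (pc X) a b \<Longrightarrow> count a Pout \<le> count b Pout"
  unfolding step_def enabled_def
proof (elim bexE conjE)
  fix u assume "b = a - mset_set (preset (pc X) u) + mset_set (postset (pc X) u)"
  moreover have "count (mset_set (preset (pc X) u)) Pout = 0"
    using Pout_notin_preset by (metis count_eq_zero_iff elem_mset_set empty_iff finite_set_mset_mset_set mset_set.infinite set_mset_empty)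
  ultimately show ?thesis by simp
qed

lemma count_Pout_reach: "reach (pc X) a b \<Longrightarrow> count a Pout \<le> count b Pout"
  unfolding reach_def
  by (induction rule: rtranclp_induct) (auto dest: count_Pout_step)

lemma sub_sound_le:
  assumes "sub_sound_p (pc X)" "reach (pc X) (replicate_mset J Pin) (x + replicate_mset J' Pout)"
  shows "J' \<le> J"
proof (rule ccontr)
  assume "\<not> J' \<le> J"
  then have eq: "x + replicate_mset J' Pout = (x + replicate_mset (J' - J) Pout) + replicate_mset J Pout"
    by (metis add.assoc le_add_diff_inverse2 nat_le_linear replicate_mset_add)
  have "reach (pc X) (x + replicate_mset (J' - J) Pout) (replicate_mset (J - J) Pout)"
    using assms unfolding sub_sound_p_def
    by (metis eq inp_pc outp_pc mset_set_single le_refl repeat_mset_replicate_mset)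
  then have "count (x + replicate_mset (J' - J) Pout) Pout \<le> 0"
    using count_Pout_reach by fastforce
  with \<open>\<not> J' \<le> J\<close> show False by simp
qed

lemma reach_Pin_Pout:
  assumes "sub_sound_p (pc X)"
  shows "reach (pc X) {#Pin#} {#Pout#}"
proof -
  have "reach (pc X) (repeat_mset 1 {#Pin#}) ({#Pin#} + repeat_mset 0 {#Pout#})"
    by (simp add: reach_refl)
  then have "reach (pc X) {#Pin#} (repeat_mset (1-0) {#Pout#})"
    using assms unfolding sub_sound_p_def by (metis inp_pc outp_pc mset_set_single zero_le)
  then show ?thesis by simp
qed


lemma preset_sub: "petri_net X \<Longrightarrow> u \<in> trans X \<Longrightarrow> preset X u \<subseteq> places X"
  unfolding petri_net_def preset_def by blast
lemma postset_sub: "petri_net X \<Longrightarrow> u \<in> trans X \<Longrightarrow> postset X u \<subseteq> places X"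
  unfolding petri_net_def postset_def by blast
lemma finite_preset: "petri_net X \<Longrightarrow> finite (preset X u)"
proof -
  assume "petri_net X"
  moreover have "preset X u \<subseteq> places X \<union> trans X" using calculation unfolding petri_net_def preset_def by blast
  ultimately show ?thesis unfolding petri_net_def by (meson finite_Un finite_subset)
qed
lemma finite_postset: "petri_net X \<Longrightarrow> finite (postset X u)"
proof -
  assume "petri_net X"
  moreover have "postset X u \<subseteq> places X \<union> trans X" using calculation unfolding petri_net_def postset_def by blast
  ultimately show ?thesis unfolding petri_net_def by (meson finite_Un finite_subset)
qed

locale subst_setup =
  fixes N M :: "'a net" and t :: 'a
  assumes pnN: "petri_net N" and pnM: "petri_net M"
   and inN: "inp N \<subseteq> trans N" and outN: "outp N \<subseteq> trans N"
   and inM: "inp M \<subseteq> trans M" and outM: "outp M \<subseteq> trans M"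
   and disj: "nodes N \<inter> nodes M = {}" and tN: "t \<in> trans N"
   and ssN: "sub_sound_p (pc N)" and ssM: "sub_sound_p (pc M)"
begin

abbreviation C where "C \<equiv> subst_trans N t M"
abbreviation preT where "preT \<equiv> mset_set (preset (pc N) (Old t))"
abbreviation postT where "postT \<equiv> mset_set (postset (pc N) (Old t))"

definition phi :: "'a pcnode \<Rightarrow> 'a pcnode multiset" where
  "phi x = (case x of Pin \<Rightarrow> preT | Pout \<Rightarrow> postT | Old p \<Rightarrow> {#Old p#})"
definition Phi :: "'a pcnode multiset \<Rightarrow> 'a pcnode multiset" where
  "Phi m = sum_mset (image_mset phi m)"

abbreviation isM where "isM x \<equiv> x \<in> Old ` places M"

lemma flowN: "flow N \<subseteq> nodes N \<times> nodes N" using pnN unfolding petri_net_def nodes_def by blast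
lemma flowM: "flow M \<subseteq> nodes M \<times> nodes M" using pnM unfolding petri_net_def nodes_def by blast
lemma PTN: "places N \<inter> trans N = {}" using pnN unfolding petri_net_def by blast
lemma PTM: "places M \<inter> trans M = {}" using pnM unfolding petri_net_def by blast
lemma preNt: "preset N t \<subseteq> places N" using preset_sub[OF pnN tN] .
lemma postNt: "postset N t \<subseteq> places N" using postset_sub[OF pnN tN] .

lemma trans_C: "trans C = (trans N - {t}) \<union> trans M" by (simp add: subst_trans_def)

lemma C_M:
  assumes u: "u \<in> trans M"
  shows "preset C u = preset M u \<union> (if u \<in> inp M then preset N t else {})"
    and "postset C u = postset M u \<union> (if u \<in> outp M then postset N t else {})"
    and "u \<in> inp C \<longleftrightarrow> t \<in> inp N \<and> u \<in> inp M"
    and "u \<in> outp C \<longleftrightarrow> t \<in> outp N \<and> u \<in> outp M"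
proof -
  have uN: "u \<notin> nodes N" using u disj by (auto simp: nodes_def)
  show "preset C u = preset M u \<union> (if u \<in> inp M then preset N t else {})"
    using uN flowN postNt u by (auto simp: subst_trans_def preset_def postset_def nodes_def)
  show "postset C u = postset M u \<union> (if u \<in> outp M then postset N t else {})"
    using uN flowN preNt u by (auto simp: subst_trans_def preset_def postset_def nodes_def)
  show "u \<in> inp C \<longleftrightarrow> t \<in> inp N \<and> u \<in> inp M"
    using uN inN by (auto simp: subst_trans_def nodes_def)
  show "u \<in> outp C \<longleftrightarrow> t \<in> outp N \<and> u \<in> outp M"
    using uN outN by (auto simp: subst_trans_def nodes_def)
qed

lemma C_N:
  assumes u: "u \<in> trans N" "u \<noteq> t"
  shows "preset C u = preset N u"
    and "postset C u = postset N u"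
    and "u \<in> inp C \<longleftrightarrow> u \<in> inp N"
    and "u \<in> outp C \<longleftrightarrow> u \<in> outp N"
proof -
  have uM: "u \<notin> nodes M" using u disj by (auto simp: nodes_def)
  have "preset N u \<subseteq> places N" using preset_sub[OF pnN u(1)] .
  then show "preset C u = preset N u"
    using uM flowM postNt u PTN inM tN by (auto simp: subst_trans_def preset_def postset_def nodes_def)
  have "postset N u \<subseteq> places N" using postset_sub[OF pnN u(1)] .
  then show "postset C u = postset N u"
    using uM flowM preNt u PTN outM tN by (auto simp: subst_trans_def preset_def postset_def nodes_def)
  show "u \<in> inp C \<longleftrightarrow> u \<in> inp N"
    using uM u inM by (auto simp: subst_trans_def nodes_def)
  show "u \<in> outp C \<longleftrightarrow> u \<in> outp N"
    using uM u outM by (auto simp: subst_trans_def nodes_def)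
qed

lemma pcC_N:
  assumes u: "u \<in> trans N" "u \<noteq> t"
  shows "preset (pc C) (Old u) = preset (pc N) (Old u)"
    and "postset (pc C) (Old u) = postset (pc N) (Old u)"
  using C_N[OF u] by (simp_all add: preset_pc postset_pc)

lemma pcC_M:
  assumes u: "u \<in> trans M"
  shows "preset (pc C) (Old u) = Old ` preset M u \<union> (if u \<in> inp M then preset (pc N) (Old t) else {})"
    and "postset (pc C) (Old u) = Old ` postset M u \<union> (if u \<in> outp M then postset (pc N) (Old t) else {})"
  by (cases "u \<in> inp M"; cases "t \<in> inp N"; simp add: preset_pc C_M[OF u] image_Un Un_assoc)
     (cases "u \<in> outp M"; cases "t \<in> outp N"; simp add: postset_pc C_M[OF u] image_Un Un_assoc)


lemma placesNM: "places N \<inter> places M = {}" using disj by (auto simp: nodes_def)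

lemma fin_pcN: "finite (preset (pc N) (Old u))" "finite (postset (pc N) (Old u))"
  using finite_preset[OF pnN] finite_postset[OF pnN] by (simp_all add: preset_pc postset_pc)

lemma preT_notM: "x \<in># preT \<Longrightarrow> \<not> isM x"
  using fin_pcN preNt placesNM by (auto simp: preset_pc split: if_splits)
lemma postT_notM: "x \<in># postT \<Longrightarrow> \<not> isM x"
  using fin_pcN postNt placesNM by (auto simp: postset_pc split: if_splits)

lemma mset_Old: "finite A \<Longrightarrow> mset_set (Old ` A) = image_mset Old (mset_set A)"
  by (simp add: image_mset_mset_set inj_on_def)

lemma msM:
  assumes u: "u \<in> trans M"
  shows "mset_set (preset (pc C) (Old u)) = image_mset Old (mset_set (preset M u)) + (if u \<in> inp M then preT else {#})"
    and "mset_set (postset (pc C) (Old u)) = image_mset Old (mset_set (postset M u)) + (if u \<in> outp M then postT else {#})"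
proof -
  have f1: "finite (preset M u)" "finite (postset M u)" using finite_preset[OF pnM] finite_postset[OF pnM] by auto
  have d1: "Old ` preset M u \<inter> preset (pc N) (Old t) = {}"
    using preset_sub[OF pnM u] preNt placesNM by (auto simp: preset_pc)
  have d2: "Old ` postset M u \<inter> postset (pc N) (Old t) = {}"
    using postset_sub[OF pnM u] postNt placesNM by (auto simp: postset_pc)
  show "mset_set (preset (pc C) (Old u)) = image_mset Old (mset_set (preset M u)) + (if u \<in> inp M then preT else {#})"
    using f1 d1 fin_pcN by (simp add: pcC_M[OF u] mset_set_Union mset_Old)
  show "mset_set (postset (pc C) (Old u)) = image_mset Old (mset_set (postset M u)) + (if u \<in> outp M then postT else {#})"
    using f1 d2 fin_pcN by (simp add: pcC_M[OF u] mset_set_Union mset_Old)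
qed

lemma mset_ins: "finite A \<Longrightarrow> mset_set (insert Pin (Old ` A)) = add_mset Pin (image_mset Old (mset_set A))"
  "finite A \<Longrightarrow> mset_set (insert Pout (Old ` A)) = add_mset Pout (image_mset Old (mset_set A))"
  by (subst mset_set.insert; auto simp: mset_Old)+

lemma msPM:
  shows "mset_set (preset (pc M) (Old u)) = image_mset Old (mset_set (preset M u)) + (if u \<in> inp M then {#Pin::'a pcnode#} else {#})"
    and "mset_set (postset (pc M) (Old u)) = image_mset Old (mset_set (postset M u)) + (if u \<in> outp M then {#Pout::'a pcnode#} else {#})"
proof -
  have f1: "finite (preset M u)" "finite (postset M u)" using finite_preset[OF pnM] finite_postset[OF pnM] by auto
  show "mset_set (preset (pc M) (Old u)) = image_mset Old (mset_set (preset M u)) + (if u \<in> inp M then {#Pin::'a pcnode#} else {#})"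
    using f1 by (simp add: preset_pc mset_ins mset_Old)
  show "mset_set (postset (pc M) (Old u)) = image_mset Old (mset_set (postset M u)) + (if u \<in> outp M then {#Pout::'a pcnode#} else {#})"
    using f1 by (simp add: postset_pc mset_ins mset_Old)
qed

lemma Phi_add[simp]: "Phi (a + b) = Phi a + Phi b" by (simp add: Phi_def)
lemma phi_simps[simp]: "phi Pin = preT" "phi Pout = postT" "phi (Old p) = {#Old p#}"
  by (simp_all add: phi_def)
lemma Phi_add_mset[simp]: "Phi (add_mset x A) = phi x + Phi A" by (simp add: Phi_def)
lemma Phi_empty[simp]: "Phi {#} = {#}" by (simp add: Phi_def)
lemma Phi_single[simp]: "Phi {#x#} = phi x" by (simp add: Phi_def)
lemma Phi_mono: "a \<subseteq># b \<Longrightarrow> Phi a \<subseteq># Phi b"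
  by (metis Phi_add mset_subset_eq_add_left subset_mset.add_diff_inverse)
lemma Phi_Old[simp]: "Phi (image_mset Old A) = image_mset Old A"
  by (induction A) (simp_all add: phi_def Phi_def)
lemma Phi_Pin[simp]: "Phi {#Pin#} = preT" by (simp add: phi_def)
lemma Phi_Pout[simp]: "Phi {#Pout#} = postT" by (simp add: phi_def)
lemma Phi_repPout: "Phi (replicate_mset D Pout) = repeat_mset D postT"
  by (induction D) (simp_all add: Phi_def phi_def)
lemma Phi_id: "(\<forall>x\<in>#A. isM x) \<Longrightarrow> Phi A = A"
  by (induction A) (auto simp: Phi_def phi_def)

lemma Phi_step:
  assumes "step (pc M) a b" shows "step (pc C) (Phi a + c) (Phi b + c)"
proof -
  obtain u where u: "u \<in> trans M" and en: "mset_set (preset (pc M) (Old u)) \<subseteq># a"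
    and b: "b = a - mset_set (preset (pc M) (Old u)) + mset_set (postset (pc M) (Old u))"
    using assms unfolding step_def enabled_def by auto
  define pre where "pre = mset_set (preset (pc M) (Old u))"
  define post where "post = mset_set (postset (pc M) (Old u))"
  have ppre: "Phi pre = mset_set (preset (pc C) (Old u))" unfolding pre_def
    using msM(1)[OF u] msPM(1)[of u] by (cases "u \<in> inp M") simp_all
  have ppost: "Phi post = mset_set (postset (pc C) (Old u))" unfolding post_def
    using msM(2)[OF u] msPM(2)[of u] by (cases "u \<in> outp M") simp_all
  have a: "a = pre + (a - pre)" using en pre_def by simp
  have Pa: "Phi a = Phi pre + Phi (a - pre)" by (subst a) simp
  have "Phi b + c = Phi (a - pre) + Phi post + c" using b pre_def post_def by simp
  also have "\<dots> = Phi a + c - Phi pre + Phi post" using Pa by (simp add: add_ac)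
  finally have eq: "Phi b + c = Phi a + c - Phi pre + Phi post" .
  have "Old u \<in> trans (pc C)" using u trans_C by simp
  moreover have "Phi pre \<subseteq># Phi a + c" using Pa by (metis mset_subset_eq_add_left subset_mset.order_trans)
  ultimately show ?thesis unfolding step_def enabled_def
    by (intro bexI[of _ "Old u"]) (use eq ppre ppost in auto)
qed

lemma Phi_reach: "reach (pc M) a b \<Longrightarrow> reach (pc C) (Phi a + c) (Phi b + c)"
  unfolding reach_def
proof (induction rule: rtranclp_induct)
  case base then show ?case by simp
next
  case (step y z) then show ?case
    by (metis (no_types, lifting) rtranclp.simps Phi_step)
qed

lemma PN_sim_step:
  assumes "step (pc N) x y" shows "reach (pc C) x y"
proof -
  obtain u where u: "u \<in> trans N" and en: "mset_set (preset (pc N) (Old u)) \<subseteq># x"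
    and y: "y = x - mset_set (preset (pc N) (Old u)) + mset_set (postset (pc N) (Old u))"
    using assms unfolding step_def enabled_def by auto
  show ?thesis
  proof (cases "u = t")
    case True
    have "reach (pc C) (Phi {#Pin#} + (x - preT)) (Phi {#Pout#} + (x - preT))"
      using Phi_reach reach_Pin_Pout[OF ssM] by blast
    then show ?thesis using True en y by (simp add: add.commute)
  next
    case False
    have "Old u \<in> trans (pc C)" using u False trans_C by simp
    then have "step (pc C) x y" unfolding step_def enabled_def
      by (intro bexI[of _ "Old u"]) (use pcC_N[OF u False] en y in auto)
    then show ?thesis by (rule step_reach)
  qed
qed

lemma PN_sim: "reach (pc N) x y \<Longrightarrow> reach (pc C) x y"
  unfolding reach_def
proof (induction rule: rtranclp_induct)
  case base then show ?case by simp
next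
  case (step y z) then show ?case
    using PN_sim_step reach_def by (metis rtranclp_trans)
qed


abbreviation piM where "piM m \<equiv> filter_mset isM m"
abbreviation piN where "piN m \<equiv> filter_mset (\<lambda>x. \<not> isM x) m"

lemma fA: "(\<forall>x\<in>#A. P x) \<Longrightarrow> filter_mset P A = A" by (induct A) auto
lemma fE: "(\<forall>x\<in>#A. \<not> P x) \<Longrightarrow> filter_mset P A = {#}" by simp

lemma notM_N:
  assumes u: "u \<in> trans N"
  shows "x \<in># mset_set (preset (pc N) (Old u)) \<Longrightarrow> \<not> isM x"
    and "x \<in># mset_set (postset (pc N) (Old u)) \<Longrightarrow> \<not> isM x"
proof -
  have s1: "preset N u \<subseteq> places N" "postset N u \<subseteq> places N"
    using preset_sub[OF pnN u] postset_sub[OF pnN u] by auto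
  show "x \<in># mset_set (preset (pc N) (Old u)) \<Longrightarrow> \<not> isM x"
    using fin_pcN s1 placesNM by (auto simp: preset_pc split: if_splits)
  show "x \<in># mset_set (postset (pc N) (Old u)) \<Longrightarrow> \<not> isM x"
    using fin_pcN s1 placesNM by (auto simp: postset_pc split: if_splits)
qed

lemma isM_M: "u \<in> trans M \<Longrightarrow> x \<in># image_mset Old (mset_set (preset M u)) \<Longrightarrow> isM x"
  "u \<in> trans M \<Longrightarrow> x \<in># image_mset Old (mset_set (postset M u)) \<Longrightarrow> isM x"
  using finite_preset[OF pnM] finite_postset[OF pnM] preset_sub[OF pnM] postset_sub[OF pnM]
  by fastforce+

lemma step_pcN_t: "preT \<subseteq># B \<Longrightarrow> step (pc N) B (B - preT + postT)"
  unfolding step_def enabled_def using tN by (intro bexI[of _ "Old t"]) auto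

lemma invariant:
  assumes "reach (pc C) (replicate_mset k Pin) m"
  shows "\<exists>D J'. reach (pc N) (replicate_mset k Pin) (piN m + repeat_mset D postT)
            \<and> reach (pc M) (replicate_mset (J' + D) Pin) (piM m + replicate_mset J' Pout)"
  using assms unfolding reach_def[of "pc C"]
proof (induction rule: rtranclp_induct)
  case base
  have e1: "piN (replicate_mset k Pin) = replicate_mset k Pin" by (induct k) auto
  have e2: "piM (replicate_mset k Pin) = {#}" by (induct k) auto
  have "reach (pc N) (replicate_mset k Pin) (piN (replicate_mset k Pin) + repeat_mset 0 postT)"
    unfolding e1 by (simp add: reach_refl)
  moreover have "reach (pc M) (replicate_mset (0 + 0) Pin) (piM (replicate_mset k Pin) + replicate_mset 0 Pout)"
    unfolding e2 by (simp add: reach_refl)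
  ultimately show ?case by blast
next
  case (step m m2)
  obtain D J' where IHN: "reach (pc N) (replicate_mset k Pin) (piN m + repeat_mset D postT)"
    and IHM: "reach (pc M) (replicate_mset (J' + D) Pin) (piM m + replicate_mset J' Pout)"
    using step.IH by blast
  obtain u where u: "u \<in> trans C" and en: "mset_set (preset (pc C) (Old u)) \<subseteq># m"
    and m2: "m2 = m - mset_set (preset (pc C) (Old u)) + mset_set (postset (pc C) (Old u))"
    using step.hyps(2) unfolding step_def enabled_def by auto
  define pre where "pre = mset_set (preset (pc C) (Old u))"
  define post where "post = mset_set (postset (pc C) (Old u))"
  have enM: "piM pre \<subseteq># piM m" and enN: "piN pre \<subseteq># piN m"
    using en pre_def by (simp_all add: multiset_filter_mono)
  have m2M: "piM m2 = piM m - piM pre + piM post" and m2N: "piN m2 = piN m - piN pre + piN post"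
    using m2 pre_def post_def by simp_all
  show ?case
  proof (cases "u \<in> trans M")
    case False
    then have uN: "u \<in> trans N" "u \<noteq> t" using u trans_C by auto
    have pre': "pre = mset_set (preset (pc N) (Old u))" "post = mset_set (postset (pc N) (Old u))"
      using pcC_N[OF uN] pre_def post_def by simp_all
    have pM: "piM pre = {#}" "piM post = {#}" using notM_N[OF uN(1)] pre' by (simp_all add: fE)
    have pN: "piN pre = pre" "piN post = post" using notM_N[OF uN(1)] pre' by (simp_all add: fA)
    have "step (pc N) (piN m) (piN m2)" unfolding step_def enabled_def
      using uN enN m2N pN pre' by (intro bexI[of _ "Old u"]) auto
    then have "reach (pc N) (piN m + repeat_mset D postT) (piN m2 + repeat_mset D postT)"
      by (intro step_reach step_add)
    moreover have "piM m2 = piM m" using m2M pM by simp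
    ultimately show ?thesis using reach_trans[OF IHN] IHM by auto
  next
    case True
    define pM where "pM = image_mset Old (mset_set (preset M u))"
    define qM where "qM = image_mset Old (mset_set (postset M u))"
    define X where "X = (if u \<in> inp M then {#Pin::'a pcnode#} else {#})"
    define Y where "Y = (if u \<in> outp M then {#Pout::'a pcnode#} else {#})"
    have pre': "pre = pM + (if u \<in> inp M then preT else {#})"
      and post': "post = qM + (if u \<in> outp M then postT else {#})"
      using msM[OF True] pre_def post_def pM_def qM_def by simp_all
    have pMM: "piM pM = pM" "piN pM = {#}" using isM_M(1)[OF True] pM_def by (simp_all add: fA fE)
    have qMM: "piM qM = qM" "piN qM = {#}" using isM_M(2)[OF True] qM_def by (simp_all add: fA fE)
    have TT: "piM preT = {#}" "piN preT = preT" "piM postT = {#}" "piN postT = postT"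
      using preT_notM postT_notM by (simp_all add: fA fE)
    have preM: "piM pre = pM" and postM: "piM post = qM" using pre' post' pMM qMM TT by simp_all
    have preN: "piN pre = (if u \<in> inp M then preT else {#})"
      and postN: "piN post = (if u \<in> outp M then postT else {#})"
      using pre' post' pMM qMM TT by simp_all
    have sM: "step (pc M) (piM m + X) (piM m2 + Y)"
    proof -
      have "mset_set (preset (pc M) (Old u)) = pM + X" "mset_set (postset (pc M) (Old u)) = qM + Y"
        using msPM[of u] pM_def qM_def X_def Y_def by simp_all
      moreover have "pM + X \<subseteq># piM m + X" using enM preM by simp
      moreover have "piM m2 + Y = piM m + X - (pM + X) + (qM + Y)"
        using m2M preM postM by simp
      ultimately show ?thesis unfolding step_def enabled_def using True
        by (intro bexI[of _ "Old u"]) auto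
    qed
    have RM: "reach (pc M) (replicate_mset (J' + D) Pin + X) (piM m2 + Y + replicate_mset J' Pout)"
    proof -
      have r1: "reach (pc M) (replicate_mset (J' + D) Pin + X) (piM m + replicate_mset J' Pout + X)"
        using IHM by (rule reach_add)
      have r2: "reach (pc M) (piM m + X + replicate_mset J' Pout) (piM m2 + Y + replicate_mset J' Pout)"
        using sM by (intro step_reach step_add)
      have eq: "piM m + replicate_mset J' Pout + X = piM m + X + replicate_mset J' Pout"
        by (simp add: add_ac)
      show ?thesis using reach_trans[OF r1[unfolded eq] r2] .
    qed
    show ?thesis
    proof (cases "u \<in> inp M")
      case True
        note inT = this
      have ptN: "reach (pc N) (piN m + repeat_mset D postT) (piN m - preT + postT + repeat_mset D postT)"
        using enN preN inT by (intro step_reach step_add step_pcN_t) simp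
      show ?thesis
      proof (cases "u \<in> outp M")
        case True
        note outT = this
        have e: "piN m2 = piN m - preT + postT" using m2N preN postN inT outT by simp
        have 1: "reach (pc N) (replicate_mset k Pin) (piN m2 + repeat_mset D postT)"
          unfolding e by (rule reach_trans[OF IHN ptN])
        have 2: "reach (pc M) (replicate_mset (Suc J' + D) Pin) (piM m2 + replicate_mset (Suc J') Pout)"
          using RM inT outT X_def Y_def by simp
        show ?thesis using 1 2 by blast
      next
        case False
        note outF = this
        have e: "piN m2 = piN m - preT" using m2N preN postN inT outF by simp
        have e2: "piN m2 + repeat_mset (Suc D) postT = piN m - preT + postT + repeat_mset D postT"
          unfolding e by (simp add: add.assoc)
        have 1: "reach (pc N) (replicate_mset k Pin) (piN m2 + repeat_mset (Suc D) postT)"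
          unfolding e2 by (rule reach_trans[OF IHN ptN])
        have 2: "reach (pc M) (replicate_mset (J' + Suc D) Pin) (piM m2 + replicate_mset J' Pout)"
          using RM inT outF X_def Y_def by simp
        show ?thesis using 1 2 by blast
      qed
    next
      case False
        note inF = this
      show ?thesis
      proof (cases "u \<in> outp M")
        case True
        note outT = this
        have 2: "reach (pc M) (replicate_mset (J' + D) Pin) (piM m2 + replicate_mset (Suc J') Pout)"
          using RM inF outT X_def Y_def by simp
        then have "Suc J' \<le> J' + D" using sub_sound_le[OF ssM] by blast
        then obtain D' where D: "D = Suc D'" by (cases D) auto
        have "piN m2 = piN m + postT" using m2N preN postN inF outT by simp
        then have 1: "reach (pc N) (replicate_mset k Pin) (piN m2 + repeat_mset D' postT)"
          using IHN D by (simp add: add_ac)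
        have b2: "reach (pc M) (replicate_mset (Suc J' + D') Pin) (piM m2 + replicate_mset (Suc J') Pout)"
          using 2 D by simp
        show ?thesis using 1 b2 by blast
      next
        case False
        note outF = this
        have "piN m2 = piN m" using m2N preN postN inF outF by simp
        moreover have "reach (pc M) (replicate_mset (J' + D) Pin) (piM m2 + replicate_mset J' Pout)"
          using RM inF outF X_def Y_def by simp
        ultimately show ?thesis using IHN by auto
      qed
    qed
  qed
qed


lemma sub_sound_C: "sub_sound_p (pc C)"
  unfolding sub_sound_p_def
proof (intro allI impI)
  fix k k' :: nat and m'
  assume le: "k' \<le> k"
    and r: "reach (pc C) (repeat_mset k (mset_set (inp (pc C)))) (m' + repeat_mset k' (mset_set (outp (pc C))))"
  from r have r': "reach (pc C) (replicate_mset k Pin) (m' + replicate_mset k' Pout)" by simp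
  obtain D J' where hN: "reach (pc N) (replicate_mset k Pin) (piN (m' + replicate_mset k' Pout) + repeat_mset D postT)"
    and hM: "reach (pc M) (replicate_mset (J' + D) Pin) (piM (m' + replicate_mset k' Pout) + replicate_mset J' Pout)"
    using invariant[OF r'] by blast
  have fP1: "piN (replicate_mset k' Pout) = replicate_mset k' Pout" by (induct k') auto
  have fP2: "piM (replicate_mset k' Pout) = {#}" by (induct k') auto
  have hM': "reach (pc M) (repeat_mset (J' + D) (mset_set (inp (pc M)))) (piM m' + repeat_mset J' (mset_set (outp (pc M))))"
    using hM fP2 by simp
  have "reach (pc M) (piM m') (repeat_mset (J' + D - J') (mset_set (outp (pc M))))"
    using ssM hM' unfolding sub_sound_p_def by (meson le_add1)
  then have m1: "reach (pc M) (piM m') (replicate_mset D Pout)" by simp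
  have "reach (pc C) (Phi (piM m') + piN m') (Phi (replicate_mset D Pout) + piN m')"
    using Phi_reach[OF m1] .
  moreover have "Phi (piM m') = piM m'" by (rule Phi_id) simp
  moreover have "piM m' + piN m' = m'" using multiset_partition[of m' isM] by simp
  ultimately have s1: "reach (pc C) m' (piN m' + repeat_mset D postT)"
    by (simp add: Phi_repPout add.commute)
  have hN': "reach (pc N) (repeat_mset k (mset_set (inp (pc N))))
      ((piN m' + repeat_mset D postT) + repeat_mset k' (mset_set (outp (pc N))))"
    using hN fP1 by (simp add: add_ac)
  have "reach (pc N) (piN m' + repeat_mset D postT) (repeat_mset (k - k') (mset_set (outp (pc N))))"
    using ssN hN' le unfolding sub_sound_p_def by blast
  then have "reach (pc C) (piN m' + repeat_mset D postT) (replicate_mset (k - k') Pout)"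
    using PN_sim by simp
  with s1 have "reach (pc C) m' (replicate_mset (k - k') Pout)" by (rule reach_trans)
  then show "reach (pc C) m' (repeat_mset (k - k') (mset_set (outp (pc C))))" by simp
qed

end

theorem mainTheorem14:
  fixes N M :: "'a net" and t :: 'a
  assumes "tWF N" and "sub_sound_t N"
    and "tWF M" and "sub_sound_t M"
    and "nodes N \<inter> nodes M = {}"
    and "t \<in> trans N"
  shows "sub_sound_t (subst_trans N t M)"
proof -
  interpret subst_setup N M t
    using assms unfolding tWF_def sub_sound_t_def by unfold_locales auto
  show ?thesis unfolding sub_sound_t_def by (rule sub_sound_C)
qed

end
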